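(* Let $(P_1,\dots,P_J)$ and $(P^*_1,\dots,P^*_J)$ be two stochastic demand systems for the budget planes $\mathcal{B}_1,\dots,\mathcal{B}_J$ such that $P_j(x)=P^*_j(x)$ for every $j\in\{1,\dots,J\}$ and every patch $x\subseteq \mathcal{B}_j$. Then $(P_1,\dots,P_J)$ is stochastically rationalizable if and only if $(P^*_1,\dots,P^*_J)$ is stochastically rationalizable. In particular, this applies when $(P^*_1,\dots,P^*_J)$ is concentrated on the fixed representatives, i.e. when each $P^*_j$ assigns probability $P_j(x)$ to the representative point $y^*(x)$ of each patch $x\subseteq\mathcal{B}_j$.
   Context: Fix integers $K\ge 1$ (number of goods) and $J\ge 1$, price vectors $p_1,\dots,p_J\in\mathbf{R}^K_{++}$, and budget planes $\mathcal{B}_j=\{y\in\mathbf{R}^K_+: p_j'y=1\}$. A point $x$ is on, strictly above, or strictly below $\mathcal{B}_j$ according as $p_j'x=1$, $p_j'x>1$, or $p_j'x<1$. A (nonstochastic) demand vector is $d=(d_1,\dots,d_J)\in\mathcal{B}_1\times\cdots\times\mathcal{B}_J$; it is rationalizable if there is a utility function $u:\mathbf{R}^K_+\to\mathbf{R}$, strictly increasing ("more is better"), with $d_j\in\arg\max_{x\in\mathcal{B}_j}u(x)$ for every $j$. A stochastic demand system is a tuple $(P_1,\dots,P_J)$ where $P_j$ is a probability distribution on $\mathcal{B}_j$; it is stochastically rationalizable if there is a probability distribution on $\mathcal{B}_1\times\cdots\times\mathcal{B}_J$, concentrated on the set of rationalizable demand vectors, whose $j$-th marginal is $P_j$ for every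 $j$ (equivalently, the $P_j$ are the distributions of demand on $\mathcal{B}_j$ generated by a population distribution over utility functions). Patches: the coarsest partition of $\bigcup_{j}\mathcal{B}_j$ such that each $\mathcal{B}_j$ is a union of cells and each cell is, for every $j$, entirely on, entirely strictly above, or entirely strictly below $\mathcal{B}_j$ (equivalently, two points of $\bigcup_j\mathcal{B}_j$ lie in the same patch iff they have the same vector of signs $(\mathrm{sign}(p_j'x-1))_{j=1}^J$). There are finitely many patches; for each patch $x$ fix, once and for all, a representative point $y^*(x)\in x$. *)

theory Defs
  imports "HOL-Probability.Probability"
begin

text \<open>Goods are indexed by a finite type 'k (K = CARD('k) >= 1), budgets by a finite
  type 'j (J = CARD('j) >= 1). A price system is p :: 'j => real^'k.\<close>

definition nonneg :: "real^'k \<Rightarrow> bool" where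
  "nonneg x \<longleftrightarrow> (\<forall>i. 0 \<le> x $ i)"

definition budget :: "real^'k \<Rightarrow> (real^'k) set" where
  "budget q = {y. nonneg y \<and> q \<bullet> y = 1}"

definition strictly_increasing :: "(real^'k \<Rightarrow> real) \<Rightarrow> bool" where
  "strictly_increasing u \<longleftrightarrow>
     (\<forall>x y. nonneg x \<and> nonneg y \<and> (\<forall>i. x $ i \<le> y $ i) \<and> x \<noteq> y \<longrightarrow> u x < u y)"

definition rationalizable :: "('j \<Rightarrow> real^'k) \<Rightarrow> (real^'k)^'j \<Rightarrow> bool" where
  "rationalizable p d \<longleftrightarrow>
     (\<exists>u. strictly_increasing u \<and>
       (\<forall>j. d $ j \<in> budget (p j) \<and> (\<forall>x \<in> budget (p j). u x \<le> u (d $ j))))"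

definition stoch_demand_system :: "('j \<Rightarrow> real^'k) \<Rightarrow> ('j \<Rightarrow> (real^'k) measure) \<Rightarrow> bool" where
  "stoch_demand_system p P \<longleftrightarrow>
     (\<forall>j. prob_space (P j) \<and> sets (P j) = sets borel \<and> emeasure (P j) (budget (p j)) = 1)"

definition stoch_rationalizable :: "('j::finite \<Rightarrow> real^'k::finite) \<Rightarrow> ('j \<Rightarrow> (real^'k) measure) \<Rightarrow> bool" where
  "stoch_rationalizable p P \<longleftrightarrow>
     (\<exists>Q :: ((real^'k)^'j) measure.
        prob_space Q \<and> sets Q = sets borel \<and>
        (AE d in Q. rationalizable p d) \<and>
        (\<forall>j. distr Q borel (\<lambda>d. d $ j) = P j))"

definition union_budgets :: "('j \<Rightarrow> real^'k) \<Rightarrow> (real^'k) set" where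
  "union_budgets p = (\<Union>j. budget (p j))"

definition is_patch :: "('j \<Rightarrow> real^'k) \<Rightarrow> (real^'k) set \<Rightarrow> bool" where
  "is_patch p x \<longleftrightarrow>
     (\<exists>y \<in> union_budgets p.
        x = {z \<in> union_budgets p. \<forall>j. sgn (p j \<bullet> z - 1) = sgn (p j \<bullet> y - 1)})"

end

theory Submission
  imports Defs
begin


definition sig :: "('j \<Rightarrow> real^'k) \<Rightarrow> real^'k \<Rightarrow> ('j \<Rightarrow> real)" where
  "sig p x = (\<lambda>j. sgn (p j \<bullet> x - 1))"

lemma inner_nonneg_pos:
  fixes q x :: "real^'k::finite"
  assumes "\<forall>i. 0 < q $ i" "nonneg x"
  shows "0 \<le> q \<bullet> x"
  using assms unfolding inner_vec_def nonneg_def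
  by (auto intro!: sum_nonneg) (metis less_eq_real_def mult_nonneg_nonneg)

lemma inner_strict_mono:
  fixes q x y :: "real^'k::finite"
  assumes "\<forall>i. 0 < q $ i" "\<forall>i. x $ i \<le> y $ i" "x \<noteq> y"
  shows "q \<bullet> x < q \<bullet> y"
proof -
  obtain k where k: "x $ k \<noteq> y $ k" using assms(3) by (metis vec_eq_iff)
  have "0 < (\<Sum>i\<in>UNIV. q $ i * (y $ i - x $ i))"
    apply (rule sum_pos2[where i=k])
    using assms k by (auto intro!: mult_pos_pos mult_nonneg_nonneg simp: less_le)
  then show ?thesis unfolding inner_vec_def by (simp add: algebra_simps sum_subtractf)
qed

lemma below_budget_dominated:
  fixes q x :: "real^'k::finite"
  assumes "\<forall>i. 0 < q $ i" "nonneg x" "q \<bullet> x < 1"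
  shows "\<exists>y\<in>budget q. (\<forall>i. x $ i \<le> y $ i) \<and> x \<noteq> y"
proof -
  obtain k :: 'k where True by simp
  define c where "c = (1 - q \<bullet> x) / q $ k"
  have qk: "0 < q $ k" using assms by blast
  then have c: "0 < c" using assms(3) by (simp add: c_def)
  define y where "y = x + c *\<^sub>R axis k 1"
  have "q \<bullet> y = q \<bullet> x + c * q $ k"
    by (simp add: y_def inner_add_right inner_axis)
  also have "\<dots> = 1" using qk by (simp add: c_def)
  finally have "q \<bullet> y = 1" .
  moreover have "nonneg y" using assms(2) c
    by (auto simp: nonneg_def y_def axis_def)
  moreover have "\<forall>i. x $ i \<le> y $ i" using c by (auto simp: y_def axis_def)
  moreover have "x \<noteq> y" using c by (auto simp: y_def vec_eq_iff axis_def)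
  ultimately show ?thesis unfolding budget_def by blast
qed

lemma sgn_eq_cases:
  fixes a b :: real
  assumes "sgn a = sgn b"
  shows "(a = 0 \<longleftrightarrow> b = 0) \<and> (a < 0 \<longleftrightarrow> b < 0)"
  using assms by (auto simp: sgn_if split: if_splits)

lemma rationalizable_transfer:
  fixes p :: "'j::finite \<Rightarrow> real^'k::finite"
  assumes pos: "\<forall>j i. 0 < p j $ i"
    and rd: "rationalizable p d"
    and bd': "\<forall>j. d' $ j \<in> budget (p j)"
    and sg: "\<forall>j. sig p (d' $ j) = sig p (d $ j)"
  shows "rationalizable p d'"
proof -
  obtain u where u: "strictly_increasing u"
    and ud: "\<And>j. d $ j \<in> budget (p j)" "\<And>j x. x \<in> budget (p j) \<Longrightarrow> u x \<le> u (d $ j)"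
    using rd unfolding rationalizable_def by blast
  define U where "U j = u (d $ j)" for j
  define V where "V j = real (card {k. U k < U j})" for j
  have le1: "U j \<le> U i" if "p i \<bullet> d $ j = 1" for i j
  proof -
    have "d $ j \<in> budget (p i)" using ud(1)[of j] that by (simp add: budget_def)
    then show ?thesis using ud(2)[of "d $ j" i] by (simp add: U_def)
  qed
  have lt1: "U j < U i" if lt: "p i \<bullet> d $ j < 1" for i j
  proof -
    have "nonneg (d $ j)" using ud(1)[of j] by (simp add: budget_def)
    moreover have "\<forall>k. 0 < p i $ k" using pos by blast
    ultimately obtain y where y: "y \<in> budget (p i)" "\<forall>k. d $ j $ k \<le> y $ k" "d $ j \<noteq> y"
      using below_budget_dominated[of "p i" "d $ j"] lt by blast
    have "u (d $ j) < u y" using u y \<open>nonneg (d $ j)\<close> unfolding strictly_increasing_def budget_def by blast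
    then show ?thesis using ud(2)[OF y(1)] by (simp add: U_def)
  qed
  have Vle: "V j \<le> V i" if "U j \<le> U i" for i j
    unfolding V_def using that by (auto intro!: card_mono)
  have Vlt: "V j + 1 \<le> V i" if "U j < U i" for i j
  proof -
    have "{k. U k < U j} \<subset> {k. U k < U i}" using that by auto
    then have "card {k. U k < U j} < card {k. U k < U i}" by (intro psubset_card_mono) auto
    then show ?thesis unfolding V_def by simp
  qed
  have Vb: "V j \<le> real CARD('j)" for j unfolding V_def by (simp add: card_mono)
  define B where "B = real CARD('j) + 1"
  define g where "g j t = (if t \<le> 1 then V j + (t - 1) / 2 else B + t)" for j t
  have gmono: "g j t < g j s" if "t < s" "0 \<le> t" for j t s
  proof -
    have "(t - 1) / 2 \<le> 0" if "t \<le> 1" for t :: real using that by simp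
    then show ?thesis
      using that Vb[of j] unfolding g_def B_def by (auto split: if_splits; smt (verit))
  qed
  define v where "v x = Min (range (\<lambda>j. g j (p j \<bullet> x)))" for x
  have vle: "v x \<le> g j (p j \<bullet> x)" for x j unfolding v_def by (rule Min_le) auto
  have vin: "\<exists>j. v x = g j (p j \<bullet> x)" for x
  proof -
    have "v x \<in> range (\<lambda>j. g j (p j \<bullet> x))" unfolding v_def by (rule Min_in) auto
    then show ?thesis by auto
  qed
  have "strictly_increasing v"
    unfolding strictly_increasing_def
  proof (intro allI impI)
    fix x y :: "real^'k" assume xy: "nonneg x \<and> nonneg y \<and> (\<forall>i. x $ i \<le> y $ i) \<and> x \<noteq> y"
    obtain j where j: "v y = g j (p j \<bullet> y)" using vin by blast
    have "v x \<le> g j (p j \<bullet> x)" by (rule vle)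
    also have "\<dots> < g j (p j \<bullet> y)"
      using xy pos by (intro gmono inner_strict_mono inner_nonneg_pos) auto
    finally show "v x < v y" using j by simp
  qed
  moreover have "v x \<le> v (d' $ i)" if x: "x \<in> budget (p i)" for x i
  proof -
    have "v x \<le> g i (p i \<bullet> x)" by (rule vle)
    also have "\<dots> = V i" using x by (simp add: budget_def g_def)
    also have "V i \<le> v (d' $ i)"
    proof -
      obtain j where j: "v (d' $ i) = g j (p j \<bullet> d' $ i)" using vin by blast
      have s: "sgn (p j \<bullet> d' $ i - 1) = sgn (p j \<bullet> d $ i - 1)"
        using sg by (metis sig_def)
      have t0: "0 \<le> p j \<bullet> d' $ i" using bd' pos by (auto intro!: inner_nonneg_pos simp: budget_def)
      consider "p j \<bullet> d' $ i = 1" | "p j \<bullet> d' $ i < 1" | "p j \<bullet> d' $ i > 1" by linarith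
      then have "V i \<le> g j (p j \<bullet> d' $ i)"
      proof cases
        case 1
        then have "p j \<bullet> d $ i = 1" using sgn_eq_cases[OF s] by simp
        then show ?thesis using 1 Vle le1 by (simp add: g_def)
      next
        case 2
        then have "p j \<bullet> d $ i < 1" using sgn_eq_cases[OF s] by simp
        then have "V i + 1 \<le> V j" using Vlt lt1 by blast
        moreover have "-1/2 \<le> (p j \<bullet> d' $ i - 1) / 2" using t0 by simp
        moreover have "g j (p j \<bullet> d' $ i) = V j + (p j \<bullet> d' $ i - 1) / 2" using 2 by (simp add: g_def)
        ultimately show ?thesis by linarith
      next
        case 3
        then show ?thesis using Vb[of i] by (simp add: g_def B_def)
      qed
      then show ?thesis using j by simp
    qed
    finally show ?thesis .
  qed
  ultimately show ?thesis unfolding rationalizable_def using bd' by blast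
qed



lemma measurable_vec_nth[measurable]:
  "(\<lambda>d::('a::euclidean_space)^'j::finite. d $ j) \<in> borel_measurable borel"
proof -
  have "(\<lambda>d::'a^'j. d $ j \<bullet> u) \<in> borel_measurable borel" for u
    by (simp add: inner_axis[symmetric] borel_measurable_inner)
  then show ?thesis by (subst borel_measurable_euclidean_space) auto
qed

lemma measurable_vec_lambda:
  "(\<lambda>f. vec_lambda f :: ('a::euclidean_space)^'j::finite) \<in> PiM UNIV (\<lambda>_. borel) \<rightarrow>\<^sub>M borel"
proof -
  have "(\<lambda>f. f j \<bullet> u) \<in> borel_measurable (PiM UNIV (\<lambda>_. (borel :: 'a measure)))" for j and u :: 'a
    by measurable
  then show ?thesis
    by (subst borel_measurable_euclidean_space) (auto simp: Basis_vec_def inner_axis)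
qed

definition SG :: "('j \<Rightarrow> real) set" where
  "SG = {f. \<forall>j. f j \<in> {-1,0,1}}"

lemma finite_SG: "finite (SG :: ('j::finite \<Rightarrow> real) set)"
proof -
  have "SG = Pi UNIV (\<lambda>_::'j. {-1,0,1::real})" by (auto simp: SG_def Pi_def)
  also have "\<dots> = PiE UNIV (\<lambda>_::'j. {-1,0,1::real})" by (simp add: PiE_UNIV_domain)
  finally show ?thesis by (metis finite_PiE finite finite.emptyI finite_insert)
qed

lemma sig_SG: "sig p x \<in> SG"
  by (auto simp: sig_def SG_def sgn_if)

definition L :: "('j \<Rightarrow> real^'k) \<Rightarrow> ('j \<Rightarrow> real) \<Rightarrow> (real^'k) set" where
  "L p \<tau> = {x. sig p x = \<tau>}"

lemma L_sets[measurable]: "L p \<tau> \<in> sets (borel :: (real^'k::finite) measure)" for p :: "'j::finite \<Rightarrow> _"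
proof -
  have "L p \<tau> = (\<Inter>j. {x. sgn (p j \<bullet> x - 1) = \<tau> j})"
    by (auto simp: L_def sig_def fun_eq_iff)
  also have "\<dots> \<in> sets borel" by measurable
  finally show ?thesis .
qed

lemma measurable_sig: "sig p \<in> borel \<rightarrow>\<^sub>M count_space SG" for p :: "'j::finite \<Rightarrow> real^'k::finite"
  using L_sets[of p] by (subst measurable_count_space_eq2) (auto simp: finite_SG sig_SG L_def vimage_def)



lemma budget_sets[measurable]: "budget q \<in> sets (borel :: (real^'k::finite) measure)"
proof -
  have "budget q = (\<Inter>i. {y. 0 \<le> y $ i}) \<inter> {y. q \<bullet> y = 1}"
    by (auto simp: budget_def nonneg_def)
  also have "\<dots> \<in> sets borel" by measurable
  finally show ?thesis .
qed

lemma sds_AE: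
  assumes "stoch_demand_system p P"
  shows "AE x in P j. x \<in> budget (p j)"
proof -
  interpret prob_space "P j" using assms by (simp add: stoch_demand_system_def)
  have s: "sets (P j) = sets borel" using assms by (simp add: stoch_demand_system_def)
  have "budget (p j) \<in> events" using s by simp
  moreover have "prob (budget (p j)) = 1"
    using assms emeasure_eq_measure[of "budget (p j)"] by (simp add: stoch_demand_system_def)
  ultimately show ?thesis by (simp add: AE_in_set_eq_1)
qed

lemma patch_measure_eq:
  fixes p :: "'j::finite \<Rightarrow> real^'k::finite"
  assumes P: "stoch_demand_system p P" and Ps: "stoch_demand_system p Ps"
    and hyp: "\<forall>j x. is_patch p x \<and> x \<subseteq> budget (p j) \<longrightarrow> measure (P j) x = measure (Ps j) x"
  shows "measure (P j) (L p \<tau>) = measure (Ps j) (L p \<tau>)"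
proof -
  have sP: "sets (P j) = sets borel" and sPs: "sets (Ps j) = sets borel"
    using P Ps by (auto simp: stoch_demand_system_def)
  have eq: "measure M (L p \<tau>) = measure M (L p \<tau> \<inter> budget (p j))"
    if "sets M = sets borel" "AE x in M. x \<in> budget (p j)" for M
    by (rule measure_eq_AE) (use that in \<open>auto\<close>)
  show ?thesis
  proof (cases "L p \<tau> \<inter> budget (p j) = {}")
    case True
    then show ?thesis using eq[OF sP sds_AE[OF P]] eq[OF sPs sds_AE[OF Ps]] by simp
  next
    case False
    then obtain y where y: "y \<in> L p \<tau>" "y \<in> budget (p j)" by blast
    have yu: "y \<in> union_budgets p" using y by (auto simp: union_budgets_def)
    have tau: "\<tau> = sig p y" using y by (simp add: L_def)
    have X: "L p \<tau> \<inter> budget (p j) = {z \<in> union_budgets p. \<forall>i. sgn (p i \<bullet> z - 1) = sgn (p i \<bullet> y - 1)}"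
    proof safe
      fix z assume "z \<in> budget (p j)" then show "z \<in> union_budgets p" by (auto simp: union_budgets_def)
    next
      fix z i assume "z \<in> L p \<tau>" then show "sgn (p i \<bullet> z - 1) = sgn (p i \<bullet> y - 1)"
        using tau by (simp add: L_def sig_def fun_eq_iff)
    next
      fix z assume z: "z \<in> union_budgets p" "\<forall>i. sgn (p i \<bullet> z - 1) = sgn (p i \<bullet> y - 1)"
      then show "z \<in> L p \<tau>" using tau by (simp add: L_def sig_def fun_eq_iff)
      have "sgn (p j \<bullet> z - 1) = 0" using z(2) y(2) by (simp add: budget_def)
      moreover have "nonneg z" using z(1) by (auto simp: union_budgets_def budget_def)
      ultimately show "z \<in> budget (p j)" by (simp add: budget_def sgn_eq_0_iff)
    qed
    have "is_patch p (L p \<tau> \<inter> budget (p j))"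
      unfolding is_patch_def using yu X by blast
    then have "measure (P j) (L p \<tau> \<inter> budget (p j)) = measure (Ps j) (L p \<tau> \<inter> budget (p j))"
      using hyp by blast
    then show ?thesis using eq[OF sP sds_AE[OF P]] eq[OF sPs sds_AE[OF Ps]] by simp
  qed
qed



definition SV :: "('j \<Rightarrow> 'j \<Rightarrow> real) set" where
  "SV = {\<sigma>. \<forall>j. \<sigma> j \<in> SG}"

lemma finite_SV: "finite (SV :: ('j::finite \<Rightarrow> 'j \<Rightarrow> real) set)"
proof -
  have "SV = Pi UNIV (\<lambda>_::'j. SG :: ('j \<Rightarrow> real) set)" by (auto simp: SV_def Pi_def)
  also have "\<dots> = PiE UNIV (\<lambda>_::'j. SG :: ('j \<Rightarrow> real) set)" by (simp add: PiE_UNIV_domain)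
  finally show ?thesis by (metis finite_PiE finite finite_SG)
qed

definition sigv :: "('j \<Rightarrow> real^'k) \<Rightarrow> (real^'k)^'j \<Rightarrow> ('j \<Rightarrow> 'j \<Rightarrow> real)" where
  "sigv p d = (\<lambda>j. sig p (d $ j))"

lemma measurable_sigv: "sigv p \<in> borel \<rightarrow>\<^sub>M count_space SV" for p :: "'j::finite \<Rightarrow> real^'k::finite"
proof (subst measurable_count_space_eq2[OF finite_SV], intro conjI ballI)
  show "sigv p \<in> space borel \<rightarrow> SV" by (auto simp: sigv_def SV_def sig_SG)
  fix \<sigma> assume "\<sigma> \<in> (SV :: ('j \<Rightarrow> 'j \<Rightarrow> real) set)"
  have "sigv p -` {\<sigma>} \<inter> space borel = (\<Inter>j. {d::(real^'k)^'j. d $ j \<in> L p (\<sigma> j)})"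
    by (auto simp: sigv_def L_def fun_eq_iff)
  also have "\<dots> \<in> sets borel" by measurable
  finally show "sigv p -` {\<sigma>} \<inter> space borel \<in> sets borel" .
qed



lemma transfer_main:
  fixes p :: "'j::finite \<Rightarrow> real^'k::finite"
  assumes pos: "\<forall>j i. 0 < p j $ i"
    and sP: "stoch_demand_system p P" and sPs: "stoch_demand_system p Ps"
    and hyp: "\<forall>j x. is_patch p x \<and> x \<subseteq> budget (p j) \<longrightarrow> measure (P j) x = measure (Ps j) x"
    and rP: "stoch_rationalizable p P"
  shows "stoch_rationalizable p Ps"
proof -
  obtain Q :: "((real^'k)^'j) measure" where Qp: "prob_space Q" and Qs: "sets Q = sets borel"
    and Qr: "AE d in Q. rationalizable p d" and Qm: "\<And>j. distr Q borel (\<lambda>d. d $ j) = P j"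
    using rP unfolding stoch_rationalizable_def by blast
  have Pp: "prob_space (P j)" "sets (P j) = sets borel" "emeasure (P j) (budget (p j)) = 1" for j
    using sP by (auto simp: stoch_demand_system_def)
  have Psp: "prob_space (Ps j)" "sets (Ps j) = sets borel" "emeasure (Ps j) (budget (p j)) = 1" for j
    using sPs by (auto simp: stoch_demand_system_def)
  have Lfin: "emeasure (Ps j) (L p \<tau>) \<noteq> \<infinity>" for j \<tau>
    using Psp(1)[of j] by (simp add: prob_space_def finite_measure.emeasure_finite)
  have LE: "emeasure (P j) (L p \<tau>) = emeasure (Ps j) (L p \<tau>)" for j \<tau>
  proof -
    have "emeasure (P j) A = ennreal (measure (P j) A)" "emeasure (Ps j) A = ennreal (measure (Ps j) A)" for A
      using Pp(1) Psp(1) by (simp_all add: prob_space_def finite_measure.emeasure_eq_measure)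
    then show ?thesis using patch_measure_eq[OF sP sPs hyp] by metis
  qed
  define Good where "Good = {\<sigma>\<in>SV. \<forall>j. emeasure (Ps j) (L p (\<sigma> j)) \<noteq> 0}"
  define M where "M \<sigma> j = uniform_measure (Ps j) (L p (\<sigma> j))" for \<sigma> j
  define K where "K \<sigma> = (if \<sigma> \<in> Good then distr (PiM UNIV (M \<sigma>)) borel vec_lambda else Q)" for \<sigma>
  define Q' where "Q' = Q \<bind> (\<lambda>d. K (sigv p d))"
  have Mp: "prob_space (M \<sigma> j)" if "\<sigma> \<in> Good" for \<sigma> j
    using that Lfin unfolding M_def Good_def by (auto intro!: prob_space_uniform_measure)
  have Ms: "sets (M \<sigma> j) = sets borel" for \<sigma> j
    using Psp(2) by (simp add: M_def)
  have vl: "vec_lambda \<in> PiM UNIV (M \<sigma>) \<rightarrow>\<^sub>M borel" for \<sigma>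
  proof -
    have "sets (PiM UNIV (M \<sigma>)) = sets (PiM UNIV (\<lambda>_. (borel :: (real^'k) measure)))"
      by (rule sets_PiM_cong) (simp_all add: Ms)
    then show ?thesis using measurable_vec_lambda by (subst measurable_cong_sets[OF _ refl]) 
  qed
  have Qa: "Q \<in> space (prob_algebra borel)"
    using Qp Qs by (simp add: space_prob_algebra)
  have Kp: "K \<sigma> \<in> space (prob_algebra borel)" for \<sigma>
  proof (cases "\<sigma> \<in> Good")
    case True
    have "prob_space (PiM UNIV (M \<sigma>))" using Mp[OF True] by (intro prob_space_PiM)
    then have "prob_space (distr (PiM UNIV (M \<sigma>)) borel vec_lambda)"
      using vl by (intro prob_space.prob_space_distr)
    then show ?thesis using True by (simp add: K_def space_prob_algebra)
  next
    case False then show ?thesis using Qa by (simp add: K_def)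
  qed
  have Km: "(\<lambda>d. K (sigv p d)) \<in> borel \<rightarrow>\<^sub>M prob_algebra borel"
    by (rule measurable_compose[OF measurable_sigv]) (simp add: Kp)
  have Q'p: "prob_space Q'" and Q's: "sets Q' = sets borel"
    unfolding Q'_def using prob_space_bind'[OF Qa Km] sets_bind'[OF Qa Km] by simp_all
  have Qmeas: "f \<in> Q \<rightarrow>\<^sub>M N \<longleftrightarrow> f \<in> borel \<rightarrow>\<^sub>M N" for f :: "(real^'k)^'j \<Rightarrow> 'z" and N :: "'z measure"
    using measurable_cong_sets[OF Qs refl, of N] by simp
  have sig_pre: "{x. sig p x \<in> T} \<in> sets (borel :: (real^'k) measure)" for T
  proof -
    have "{x. sig p x \<in> T} = sig p -` (T \<inter> SG) \<inter> space borel" using sig_SG[of p] by auto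
    also have "\<dots> \<in> sets borel" by (rule measurable_sets[OF measurable_sig]) simp
    finally show ?thesis .
  qed
  have AEpos: "AE d in Q. emeasure (Ps j) (L p (sig p (d $ j))) \<noteq> 0" for j
  proof -
    have "AE x in P j. \<forall>\<tau>\<in>SG. emeasure (Ps j) (L p \<tau>) = 0 \<longrightarrow> x \<notin> L p \<tau>"
    proof (rule AE_finite_allI[OF finite_SG])
      fix \<tau> :: "'j \<Rightarrow> real"
      show "AE x in P j. emeasure (Ps j) (L p \<tau>) = 0 \<longrightarrow> x \<notin> L p \<tau>"
      proof (cases "emeasure (Ps j) (L p \<tau>) = 0")
        case True
        then have "L p \<tau> \<in> null_sets (P j)" using LE Pp(2) by (intro null_setsI) auto
        then show ?thesis by (rule AE_mp[OF AE_not_in]) auto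
      qed simp
    qed
    then have "AE x in P j. emeasure (Ps j) (L p (sig p x)) \<noteq> 0"
      by (rule eventually_mono) (use sig_SG in \<open>auto simp: L_def\<close>)
    then have "AE x in distr Q borel (\<lambda>d. d $ j). emeasure (Ps j) (L p (sig p x)) \<noteq> 0"
      by (simp only: Qm)
    moreover have "{x \<in> space borel. emeasure (Ps j) (L p (sig p x)) \<noteq> 0} \<in> sets (borel :: (real^'k) measure)"
      using sig_pre[of "{\<tau>. emeasure (Ps j) (L p \<tau>) \<noteq> 0}"] by simp
    ultimately show ?thesis by (subst (asm) AE_distr_iff) (auto simp: Qmeas)
  qed
  have AEgood: "AE d in Q. sigv p d \<in> Good"
  proof -
    have "AE d in Q. \<forall>j\<in>UNIV. emeasure (Ps j) (L p (sig p (d $ j))) \<noteq> 0"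
      by (rule AE_finite_allI) (simp_all add: AEpos)
    then show ?thesis
      by (rule eventually_mono) (auto simp: Good_def sigv_def SV_def sig_SG)
  qed
  have Kgood: "emeasure (K \<sigma>) {d. d $ j \<in> A} = emeasure (Ps j) (L p (\<sigma> j) \<inter> A) / emeasure (Ps j) (L p (\<sigma> j))"
    if "\<sigma> \<in> Good" "A \<in> sets borel" for \<sigma> j A
  proof -
    have meas: "{d :: (real^'k)^'j. d $ j \<in> A} \<in> sets borel" using that(2) by measurable
    have "emeasure (K \<sigma>) {d. d $ j \<in> A} = emeasure (PiM UNIV (M \<sigma>)) (vec_lambda -` {d. d $ j \<in> A} \<inter> space (PiM UNIV (M \<sigma>)))"
      using that(1) by (simp add: K_def emeasure_distr[OF vl meas])
    also have "vec_lambda -` {d. d $ j \<in> A} \<inter> space (PiM UNIV (M \<sigma>)) = (\<lambda>\<omega>. \<omega> j) -` A \<inter> space (PiM UNIV (M \<sigma>))"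
      by auto
    also have "emeasure (PiM UNIV (M \<sigma>)) \<dots> = emeasure (distr (PiM UNIV (M \<sigma>)) (M \<sigma> j) (\<lambda>\<omega>. \<omega> j)) A"
      using that(2) Ms by (subst emeasure_distr) (auto intro!: measurable_component_singleton)
    also have "\<dots> = emeasure (M \<sigma> j) A"
      using Mp[OF that(1)] by (subst distr_PiM_component) auto
    also have "\<dots> = emeasure (Ps j) (L p (\<sigma> j) \<inter> A) / emeasure (Ps j) (L p (\<sigma> j))"
      unfolding M_def using that(2) Psp(2) by (subst emeasure_uniform_measure) auto
    finally show ?thesis .
  qed
  have "distr Q' borel (\<lambda>d. d $ j) = Ps j" for j
  proof (rule measure_eqI)
    show "sets (distr Q' borel (\<lambda>d. d $ j)) = sets (Ps j)" using Psp(2) by simp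
    fix A assume "A \<in> sets (distr Q' borel (\<lambda>d. d $ j))"
    then have A: "A \<in> sets borel" by simp
    define c where "c \<tau> = emeasure (Ps j) (L p \<tau> \<inter> A) / emeasure (Ps j) (L p \<tau>)" for \<tau>
    have meas: "{d :: (real^'k)^'j. d $ j \<in> A} \<in> sets borel" using A by measurable
    have "emeasure (distr Q' borel (\<lambda>d. d $ j)) A = emeasure Q' {d. d $ j \<in> A}"
      using A Q's by (subst emeasure_distr) (auto simp: measurable_cong_sets[OF Q's refl] vimage_def)
    also have "\<dots> = (\<integral>\<^sup>+d. emeasure (K (sigv p d)) {d. d $ j \<in> A} \<partial>Q)"
      unfolding Q'_def using Qa Km meas by (subst emeasure_bind_prob_algebra) auto
    also have "\<dots> = (\<integral>\<^sup>+d. c (sig p (d $ j)) \<partial>Q)"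
      using AEgood by (intro nn_integral_cong_AE) (auto elim!: eventually_mono simp: Kgood A c_def sigv_def)
    also have "\<dots> = (\<integral>\<^sup>+x. c (sig p x) \<partial>P j)"
    proof -
      have cm: "(\<lambda>x. c (sig p x)) \<in> borel_measurable (borel :: (real^'k) measure)"
        by (rule measurable_compose[OF measurable_sig]) simp
      have "(\<integral>\<^sup>+x. c (sig p x) \<partial>distr Q borel (\<lambda>d. d $ j)) = (\<integral>\<^sup>+d. c (sig p (d $ j)) \<partial>Q)"
        using cm by (subst nn_integral_distr) (auto simp: Qmeas)
      then show ?thesis by (simp only: Qm)
    qed
    also have "\<dots> = (\<integral>\<^sup>+x. (\<Sum>\<tau>\<in>SG. c \<tau> * indicator (L p \<tau>) x) \<partial>P j)"
    proof (rule nn_integral_cong)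
      fix x
      have "(\<Sum>\<tau>\<in>SG. c \<tau> * indicator (L p \<tau>) x) = (\<Sum>\<tau>\<in>SG. if \<tau> = sig p x then c \<tau> else 0)"
        by (rule sum.cong) (auto simp: L_def indicator_def)
      also have "\<dots> = c (sig p x)" by (subst sum.delta[OF finite_SG]) (simp add: sig_SG)
      finally show "c (sig p x) = (\<Sum>\<tau>\<in>SG. c \<tau> * indicator (L p \<tau>) x)" by simp
    qed
    also have "\<dots> = (\<Sum>\<tau>\<in>SG. c \<tau> * emeasure (P j) (L p \<tau>))"
    proof -
      have "(\<lambda>x. c \<tau> * indicator (L p \<tau>) x) \<in> borel_measurable (P j)" for \<tau>
        unfolding measurable_cong_sets[OF Pp(2) refl] by measurable
      then show ?thesis using Pp(2) by (subst nn_integral_sum) (auto simp: nn_integral_cmult_indicator)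
    qed
    also have "\<dots> = (\<Sum>\<tau>\<in>SG. emeasure (Ps j) (L p \<tau> \<inter> A))"
    proof (rule sum.cong[OF refl])
      fix \<tau> :: "'j \<Rightarrow> real"
      have le: "emeasure (Ps j) (L p \<tau> \<inter> A) \<le> emeasure (Ps j) (L p \<tau>)"
        using Psp(2) by (intro emeasure_mono) auto
      show "c \<tau> * emeasure (P j) (L p \<tau>) = emeasure (Ps j) (L p \<tau> \<inter> A)"
      proof (cases "emeasure (Ps j) (L p \<tau>) = 0")
        case True then show ?thesis using le LE by (simp add: c_def)
      next
        case False
        then show ?thesis using LE Lfin
          by (simp add: c_def ennreal_divide_times top.not_eq_extremum)
      qed
    qed
    also have "\<dots> = emeasure (Ps j) (\<Union>\<tau>\<in>SG. L p \<tau> \<inter> A)"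
      using Psp(2) A finite_SG L_sets[of p] by (intro sum_emeasure) (auto simp: disjoint_family_on_def L_def)
    also have "(\<Union>\<tau>\<in>SG. L p \<tau> \<inter> A) = A"
      using sig_SG by (auto simp: L_def)
    finally show "emeasure (distr Q' borel (\<lambda>d. d $ j)) A = emeasure (Ps j) A" .
  qed
  moreover have "AE d in Q'. rationalizable p d"
  proof -
    define R where "R = sigv p ` {d. rationalizable p d}"
    define G where "G = {d'::(real^'k)^'j. (\<forall>j. d' $ j \<in> budget (p j)) \<and> sigv p d' \<in> R}"
    have Gsets: "G \<in> sets borel"
    proof -
      have "{d'::(real^'k)^'j. sigv p d' \<in> R} = sigv p -` (R \<inter> SV) \<inter> space borel"
        by (auto simp: sigv_def SV_def sig_SG)
      also have "\<dots> \<in> sets borel" by (rule measurable_sets[OF measurable_sigv]) simp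
      finally have 1: "{d'::(real^'k)^'j. sigv p d' \<in> R} \<in> sets borel" .
      have 2: "{d'::(real^'k)^'j. \<forall>j. d' $ j \<in> budget (p j)} \<in> sets borel" by measurable
      have "G = {d'. \<forall>j. d' $ j \<in> budget (p j)} \<inter> {d'. sigv p d' \<in> R}" by (auto simp: G_def)
      then show ?thesis using 1 2 by simp
    qed
    have Grat: "rationalizable p d'" if dG: "d' \<in> G" for d'
    proof -
      obtain d where d: "rationalizable p d" "sigv p d' = sigv p d" using dG by (auto simp: G_def R_def)
      show ?thesis
        by (rule rationalizable_transfer[OF pos d(1)]) (use dG d(2) in \<open>auto simp: G_def sigv_def fun_eq_iff\<close>)
    qed
    have inner: "AE d' in K (sigv p d). d' \<in> G" if "rationalizable p d" "sigv p d \<in> Good" for d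
    proof -
      let ?\<sigma> = "sigv p d"
      have "AE \<omega> in PiM UNIV (M ?\<sigma>). \<forall>j\<in>UNIV. \<omega> j \<in> budget (p j) \<and> sig p (\<omega> j) = sig p (d $ j)"
      proof (rule AE_finite_allI)
        fix j :: 'j
        have "AE x in Ps j. x \<in> L p (?\<sigma> j) \<longrightarrow> x \<in> budget (p j) \<and> sig p x = sig p (d $ j)"
          using sds_AE[OF sPs, of j] by (rule eventually_mono) (auto simp: L_def sigv_def)
        then have "AE x in M ?\<sigma> j. x \<in> budget (p j) \<and> sig p x = sig p (d $ j)"
          unfolding M_def using Psp(2) by (intro AE_uniform_measureI) auto
        then show "AE \<omega> in PiM UNIV (M ?\<sigma>). \<omega> j \<in> budget (p j) \<and> sig p (\<omega> j) = sig p (d $ j)"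
          using Mp[OF that(2)] by (intro AE_PiM_component) auto
      qed simp
      then have "AE \<omega> in PiM UNIV (M ?\<sigma>). vec_lambda \<omega> \<in> G"
        by (rule eventually_mono) (auto simp: G_def R_def sigv_def fun_eq_iff intro: that(1))
      then have "AE d' in distr (PiM UNIV (M ?\<sigma>)) borel vec_lambda. d' \<in> G"
        using Gsets by (subst AE_distr_iff[OF vl]) auto
      moreover have "K ?\<sigma> = distr (PiM UNIV (M ?\<sigma>)) borel vec_lambda"
        unfolding K_def using that(2) by (rule if_P)
      ultimately show ?thesis by (simp only:)
    qed
    have "AE d in Q. AE d' in K (sigv p d). d' \<in> G"
      using Qr AEgood by eventually_elim (rule inner)
    then have "AE d' in Q'. d' \<in> G"
      unfolding Q'_def using Gsets
      by (subst AE_bind[where B=borel]) (auto simp: Qmeas intro: measurable_prob_algebraD[OF Km])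
    then show ?thesis by (rule eventually_mono) (rule Grat)
  qed
  ultimately show ?thesis unfolding stoch_rationalizable_def using Q'p Q's by blast
qed



lemma patch_is_L:
  assumes "is_patch p x" "x \<subseteq> budget (p j)"
  shows "x = L p (sig p (SOME y. y \<in> x)) \<inter> budget (p j) \<and> x \<noteq> {}"
proof -
  obtain y where y: "y \<in> union_budgets p"
    and x: "x = {z \<in> union_budgets p. \<forall>i. sgn (p i \<bullet> z - 1) = sgn (p i \<bullet> y - 1)}"
    using assms(1) unfolding is_patch_def by blast
  have yx: "y \<in> x" using y x by simp
  define y' where "y' = (SOME y. y \<in> x)"
  have y'x: "y' \<in> x" unfolding y'_def using yx by (rule someI)
  have "sig p y' = sig p y" using y'x x by (simp add: sig_def fun_eq_iff)
  moreover have "x = L p (sig p y) \<inter> budget (p j)"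
  proof safe
    fix z assume "z \<in> x" then show "z \<in> L p (sig p y)" using x by (simp add: L_def sig_def fun_eq_iff)
  next
    fix z assume "z \<in> x" then show "z \<in> budget (p j)" using assms(2) by blast
  next
    fix z assume "z \<in> L p (sig p y)" "z \<in> budget (p j)"
    then show "z \<in> x" using x by (auto simp: L_def sig_def fun_eq_iff union_budgets_def)
  qed
  ultimately show ?thesis using yx unfolding y'_def by auto
qed

lemma L_is_patch:
  assumes "L p \<tau> \<inter> budget (p j) \<noteq> {}"
  shows "is_patch p (L p \<tau> \<inter> budget (p j))"
proof -
  obtain y where y: "y \<in> L p \<tau>" "y \<in> budget (p j)" using assms by blast
  have yu: "y \<in> union_budgets p" using y by (auto simp: union_budgets_def)
  have tau: "\<tau> = sig p y" using y by (simp add: L_def)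
  have X: "L p \<tau> \<inter> budget (p j) = {z \<in> union_budgets p. \<forall>i. sgn (p i \<bullet> z - 1) = sgn (p i \<bullet> y - 1)}"
  proof safe
    fix z assume "z \<in> budget (p j)" then show "z \<in> union_budgets p" by (auto simp: union_budgets_def)
  next
    fix z i assume "z \<in> L p \<tau>" then show "sgn (p i \<bullet> z - 1) = sgn (p i \<bullet> y - 1)"
      using tau by (simp add: L_def sig_def fun_eq_iff)
  next
    fix z assume z: "z \<in> union_budgets p" "\<forall>i. sgn (p i \<bullet> z - 1) = sgn (p i \<bullet> y - 1)"
    then show "z \<in> L p \<tau>" using tau by (simp add: L_def sig_def fun_eq_iff)
    have "sgn (p j \<bullet> z - 1) = 0" using z(2) y(2) by (simp add: budget_def)
    moreover have "nonneg z" using z(1) by (auto simp: union_budgets_def budget_def)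
    ultimately show "z \<in> budget (p j)" by (simp add: budget_def sgn_eq_0_iff)
  qed
  show ?thesis unfolding is_patch_def using yu X by blast
qed

lemma star_hyp:
  fixes p :: "'j::finite \<Rightarrow> real^'k::finite"
  assumes ys: "\<forall>x. is_patch p x \<longrightarrow> ystar x \<in> x"
    and sP: "stoch_demand_system p P" and sPs: "stoch_demand_system p Ps"
    and h: "\<forall>j x. is_patch p x \<and> x \<subseteq> budget (p j) \<longrightarrow> measure (Ps j) {ystar x} = measure (P j) x"
  shows "\<forall>j x. is_patch p x \<and> x \<subseteq> budget (p j) \<longrightarrow> measure (P j) x = measure (Ps j) x"
proof (intro allI impI)
  fix j x assume jx: "is_patch p x \<and> x \<subseteq> budget (p j)"
  have Pp: "finite_measure (P j)" "sets (P j) = sets borel" "emeasure (P j) (budget (p j)) = 1"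
    using sP by (auto simp: stoch_demand_system_def prob_space_def)
  have Psp: "finite_measure (Ps j)" "sets (Ps j) = sets borel" "emeasure (Ps j) (budget (p j)) = 1"
    using sPs by (auto simp: stoch_demand_system_def prob_space_def)
  define X where "X \<tau> = L p \<tau> \<inter> budget (p j)" for \<tau>
  define a where "a \<tau> = measure (P j) (X \<tau>)" for \<tau>
  define b where "b \<tau> = measure (Ps j) (X \<tau>)" for \<tau>
  have Xs: "X \<tau> \<in> sets borel" for \<tau> unfolding X_def by simp
  have ab: "a \<tau> \<le> b \<tau>" for \<tau>
  proof (cases "X \<tau> = {}")
    case True then show ?thesis by (simp add: a_def b_def)
  next
    case False
    then have pt: "is_patch p (X \<tau>)" unfolding X_def by (rule L_is_patch)
    then have "ystar (X \<tau>) \<in> X \<tau>" using ys by blast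
    then have "measure (Ps j) {ystar (X \<tau>)} \<le> measure (Ps j) (X \<tau>)"
      using Psp Xs by (intro finite_measure.finite_measure_mono) auto
    moreover have "measure (Ps j) {ystar (X \<tau>)} = a \<tau>"
      using h pt unfolding a_def by (auto simp: X_def)
    ultimately show ?thesis by (simp add: b_def)
  qed
  have U: "(\<Union>\<tau>\<in>SG. X \<tau>) = budget (p j)" using sig_SG by (auto simp: X_def L_def)
  have disj: "disjoint_family_on X SG" by (auto simp: disjoint_family_on_def X_def L_def)
  have "(\<Sum>\<tau>\<in>SG. a \<tau>) = measure (P j) (budget (p j))"
    unfolding a_def U[symmetric] using Pp Xs finite_SG disj
    by (intro finite_measure.finite_measure_finite_Union[symmetric]) auto
  also have "\<dots> = 1" using Pp(3) by (simp add: measure_def)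
  finally have sa: "(\<Sum>\<tau>\<in>SG. a \<tau>) = 1" .
  have "(\<Sum>\<tau>\<in>SG. b \<tau>) = measure (Ps j) (budget (p j))"
    unfolding b_def U[symmetric] using Psp Xs finite_SG disj
    by (intro finite_measure.finite_measure_finite_Union[symmetric]) auto
  also have "\<dots> = 1" using Psp(3) by (simp add: measure_def)
  finally have sb: "(\<Sum>\<tau>\<in>SG. b \<tau>) = 1" .
  have "(\<Sum>\<tau>\<in>SG. b \<tau> - a \<tau>) = 0" using sa sb by (simp add: sum_subtractf)
  then have eq0: "\<forall>\<tau>\<in>SG. b \<tau> - a \<tau> = 0"
    using ab finite_SG by (subst (asm) sum_nonneg_eq_0_iff) auto
  have xe: "x = X (sig p (SOME y. y \<in> x))" using patch_is_L[of p x j] jx by (simp add: X_def)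
  show "measure (P j) x = measure (Ps j) x"
    using eq0 sig_SG xe unfolding a_def b_def by (metis eq_iff_diff_eq_0)
qed

theorem proposition1:
  fixes p :: "'j::finite \<Rightarrow> real^'k::finite"
  assumes "\<forall>j i. 0 < p j $ i"
  shows
    "(\<forall>P Ps. stoch_demand_system p P \<and> stoch_demand_system p Ps \<and>
        (\<forall>j x. is_patch p x \<and> x \<subseteq> budget (p j) \<longrightarrow> measure (P j) x = measure (Ps j) x)
      \<longrightarrow> (stoch_rationalizable p P \<longleftrightarrow> stoch_rationalizable p Ps))
   \<and> (\<forall>ystar P Ps. (\<forall>x. is_patch p x \<longrightarrow> ystar x \<in> x) \<and>
        stoch_demand_system p P \<and> stoch_demand_system p Ps \<and>
        (\<forall>j x. is_patch p x \<and> x \<subseteq> budget (p j) \<longrightarrow> measure (Ps j) {ystar x} = measure (P j) x)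
      \<longrightarrow> (stoch_rationalizable p P \<longleftrightarrow> stoch_rationalizable p Ps))"
proof -
  have part1: "stoch_rationalizable p P \<longleftrightarrow> stoch_rationalizable p Ps"
    if "stoch_demand_system p P" "stoch_demand_system p Ps"
      "\<forall>j x. is_patch p x \<and> x \<subseteq> budget (p j) \<longrightarrow> measure (P j) x = measure (Ps j) x" for P Ps
  proof
    assume "stoch_rationalizable p P"
    then show "stoch_rationalizable p Ps" using transfer_main[OF assms that] by blast
  next
    assume r: "stoch_rationalizable p Ps"
    have "\<forall>j x. is_patch p x \<and> x \<subseteq> budget (p j) \<longrightarrow> measure (Ps j) x = measure (P j) x"
      using that(3) by metis
    then show "stoch_rationalizable p P" using transfer_main[OF assms that(2) that(1) _ r] by blast
  qed
  show ?thesis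
  proof (intro conjI allI impI)
    fix P Ps assume "stoch_demand_system p P \<and> stoch_demand_system p Ps \<and>
        (\<forall>j x. is_patch p x \<and> x \<subseteq> budget (p j) \<longrightarrow> measure (P j) x = measure (Ps j) x)"
    then show "stoch_rationalizable p P \<longleftrightarrow> stoch_rationalizable p Ps" using part1 by blast
  next
    fix ystar P Ps assume H: "(\<forall>x. is_patch p x \<longrightarrow> ystar x \<in> x) \<and>
        stoch_demand_system p P \<and> stoch_demand_system p Ps \<and>
        (\<forall>j x. is_patch p x \<and> x \<subseteq> budget (p j) \<longrightarrow> measure (Ps j) {ystar x} = measure (P j) x)"
    then have "\<forall>j x. is_patch p x \<and> x \<subseteq> budget (p j) \<longrightarrow> measure (P j) x = measure (Ps j) x"
      by (intro star_hyp[where ystar=ystar]) auto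
    then show "stoch_rationalizable p P \<longleftrightarrow> stoch_rationalizable p Ps" using part1 H by blast
  qed
qed


end
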